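(* For every integer $l\ge1$, let $\mathcal{I}_6(l)$ be the index coding instance on $[4l+1]$ with $A_{2i-1}=\{2j: j\in[2l]\setminus\{i\}\}\cup\{4l+1\}$ and $A_{2i}=\{2i-1\}$ for $i\in[2l]$, and $A_{4l+1}=\{2i-1: i\in[2l]\}$. Then $\beta_{\text{R}}(\mathcal{I}_6(l))=3l+\tfrac12$.
   Context: Recursive scheme for an instance with side-information sets $A_i\subseteq[m]\setminus\{i\}$: set $\beta_{\text{R}}(\{i\})=1$ for all $i\in[m]$, and for $M\subseteq[m]$ with $|M|\ge2$ define recursively $$\beta_{\text{R}}(M)=\min\max_{i\in M}\sum_{j\in[n]:\,M_j\not\subseteq A_i}\gamma_j\,\beta_{\text{R}}(M_j),$$ where the minimum is over finite families of nonempty proper subsets $M_1,\dots,M_n\subsetneq M$ and weights $\gamma_j\in[0,1]$ with $\sum_{j:\,i\in M_j}\gamma_j\ge1$ for every $i\in M$. Then $\beta_{\text{R}}(\mathcal{I})=\beta_{\text{R}}([m])$. *)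

theory Defs
  imports Complex_Main
begin

definition valid_family ::
  "nat set \<Rightarrow> nat \<Rightarrow> (nat \<Rightarrow> nat set) \<Rightarrow> (nat \<Rightarrow> real) \<Rightarrow> bool" where
  "valid_family M n Ms g \<longleftrightarrow>
     (\<forall>j<n. Ms j \<noteq> {} \<and> Ms j \<subset> M \<and> 0 \<le> g j \<and> g j \<le> 1) \<and>
     (\<forall>i\<in>M. (\<Sum>j\<in>{j. j < n \<and> i \<in> Ms j}. g j) \<ge> 1)"

definition family_cost ::
  "(nat \<Rightarrow> nat set) \<Rightarrow> (nat set \<Rightarrow> real) \<Rightarrow> nat set \<Rightarrow> nat \<Rightarrow> (nat \<Rightarrow> nat set) \<Rightarrow> (nat \<Rightarrow> real) \<Rightarrow> real" where
  "family_cost A f M n Ms g =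
     Max ((\<lambda>i. \<Sum>j\<in>{j. j < n \<and> \<not> Ms j \<subseteq> A i}. g j * f (Ms j)) ` M)"

text \<open>The minimum of the paper is rendered as an infimum (it is attained).\<close>

definition betaR_set :: "(nat \<Rightarrow> nat set) \<Rightarrow> nat set \<Rightarrow> real" where
  "betaR_set A = wfrec finite_psubset
     (\<lambda>f M. if card M = 1 then 1
            else Inf {family_cost A f M n Ms g | n Ms g. valid_family M n Ms g})"

definition betaR :: "nat \<Rightarrow> (nat \<Rightarrow> nat set) \<Rightarrow> real" where
  "betaR m A = betaR_set A {1..m}"

definition I6 :: "nat \<Rightarrow> nat \<Rightarrow> nat set" where
  "I6 l k =
     (if k = 4*l+1 then {2*i - 1 | i. i \<in> {1..2*l}}
      else if odd k then {2*j | j. j \<in> {1..2*l} - {(k+1) div 2}} \<union> {4*l+1}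
      else {k - 1})"

end

theory Submission
  imports Defs
begin


lemma family_cost_cong:
  "(\<And>j. j < n \<Longrightarrow> f (Ms j) = f' (Ms j)) \<Longrightarrow> family_cost A f M n Ms g = family_cost A f' M n Ms g"
  unfolding family_cost_def
  by (intro arg_cong[where f=Max] image_cong refl sum.cong) auto

lemma betaR_set_unfold:
  assumes "finite M"
  shows "betaR_set A M = (if card M = 1 then 1 else
     Inf {family_cost A (betaR_set A) M n Ms g | n Ms g. valid_family M n Ms g})"
proof -
  have "betaR_set A M = (if card M = 1 then 1 else
     Inf {family_cost A (cut (betaR_set A) finite_psubset M) M n Ms g | n Ms g. valid_family M n Ms g})"
    unfolding betaR_set_def by (subst wfrec[OF wf_finite_psubset]) simp
  also have "{family_cost A (cut (betaR_set A) finite_psubset M) M n Ms g | n Ms g. valid_family M n Ms g}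
     = {family_cost A (betaR_set A) M n Ms g | n Ms g. valid_family M n Ms g}"
  proof -
    have "family_cost A (cut (betaR_set A) finite_psubset M) M n Ms g = family_cost A (betaR_set A) M n Ms g"
      if "valid_family M n Ms g" for n Ms g
      using that assms by (intro family_cost_cong) (auto simp: valid_family_def finite_psubset_def cut_apply)
    then show ?thesis by (intro Collect_cong) metis
  qed
  finally show ?thesis .
qed


lemma singleton_valid:
  assumes "finite M" "card M \<ge> 2"
  shows "valid_family M (card M) (\<lambda>j. {sorted_list_of_set M ! j}) (\<lambda>_. 1)"
proof -
  let ?xs = "sorted_list_of_set M"
  have len: "length ?xs = card M" by simp
  have mem: "?xs ! j \<in> M" if "j < card M" for j
    using that assms(1) nth_mem[of j ?xs] by simp
  have psub: "{?xs ! j} \<subset> M" if "j < card M" for j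
  proof -
    have "{?xs ! j} \<noteq> M"
    proof
      assume "{?xs ! j} = M"
      then have "card M = card {?xs ! j}" by simp
      then have "card M = 1" by simp
      with assms(2) show False by simp
    qed
    then show ?thesis using mem[OF that] unfolding psubset_eq by simp
  qed
  have cov: "1 \<le> (\<Sum>j\<in>{j. j < card M \<and> i \<in> {?xs ! j}}. (1::real))" if "i \<in> M" for i
  proof -
    have "i \<in> set ?xs" using that assms(1) by simp
    then obtain k where k: "k < length ?xs" "?xs ! k = i"
      by (auto simp: in_set_conv_nth)
    have "k \<in> {j. j < card M \<and> i \<in> {?xs ! j}}" using k len by auto
    moreover have "finite {j. j < card M \<and> i \<in> {?xs ! j}}" by simp
    ultimately have "card {j. j < card M \<and> i \<in> {?xs ! j}} > 0"
      by (auto simp: card_gt_0_iff)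
    then show ?thesis by simp
  qed
  show ?thesis unfolding valid_family_def using psub cov by auto
qed

lemma exists_family:
  assumes "finite M" "card M \<ge> 2"
  shows "\<exists>n Ms g. valid_family M n Ms g"
  using singleton_valid[OF assms] by blast

lemma lower_bound_intro:
  assumes "finite M" "card M \<ge> 2"
    and "\<And>n Ms g. valid_family M n Ms g \<Longrightarrow> v \<le> family_cost A (betaR_set A) M n Ms g"
  shows "v \<le> betaR_set A M"
proof -
  have "card M \<noteq> 1" using assms(2) by simp
  then have eq: "betaR_set A M = Inf {family_cost A (betaR_set A) M n Ms g | n Ms g. valid_family M n Ms g}"
    using betaR_set_unfold[OF assms(1)] by simp
  show ?thesis unfolding eq
    apply (rule cInf_greatest)
    using exists_family[OF assms(1,2)] assms(3) by auto
qed

lemma cost_ge_user: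
  assumes "finite M" "i \<in> M"
  shows "(\<Sum>j\<in>{j. j < n \<and> \<not> Ms j \<subseteq> A i}. g j * f (Ms j)) \<le> family_cost A f M n Ms g"
  unfolding family_cost_def using assms by (intro Max_ge) auto

lemma double_counting:
  assumes "valid_family M n Ms g" "finite M" "\<And>x. x \<in> M \<Longrightarrow> wt x \<ge> (0::real)"
  shows "(\<Sum>x\<in>M. wt x) \<le> (\<Sum>j<n. g j * (\<Sum>x\<in>Ms j. wt x))"
proof -
  have sub: "Ms j \<subseteq> M" if "j < n" for j using assms(1) that unfolding valid_family_def by auto
  have "(\<Sum>j<n. g j * (\<Sum>x\<in>Ms j. wt x)) = (\<Sum>j<n. \<Sum>x\<in>M. if x \<in> Ms j then g j * wt x else 0)"
  proof (rule sum.cong[OF refl])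
    fix j assume "j \<in> {..<n}"
    then have h: "{x \<in> M. x \<in> Ms j} = Ms j" using sub by auto
    have "(\<Sum>x\<in>M. if x \<in> Ms j then g j * wt x else 0) = (\<Sum>x\<in>{x \<in> M. x \<in> Ms j}. g j * wt x)"
      by (simp only: sum.inter_filter[OF assms(2)])
    then have "(\<Sum>x\<in>Ms j. g j * wt x) = (\<Sum>x\<in>M. if x \<in> Ms j then g j * wt x else 0)"
      unfolding h by simp
    then show "g j * (\<Sum>x\<in>Ms j. wt x) = (\<Sum>x\<in>M. if x \<in> Ms j then g j * wt x else 0)"
      by (simp add: sum_distrib_left)
  qed
  also have "\<dots> = (\<Sum>x\<in>M. \<Sum>j<n. if x \<in> Ms j then g j * wt x else 0)"
    by (rule sum.swap)
  also have "\<dots> = (\<Sum>x\<in>M. wt x * (\<Sum>j\<in>{j. j < n \<and> x \<in> Ms j}. g j))"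
  proof (rule sum.cong[OF refl])
    fix x assume "x \<in> M"
    have "{j. j < n \<and> x \<in> Ms j} = {j \<in> {..<n}. x \<in> Ms j}" by auto
    then have e1: "(\<Sum>j\<in>{j. j < n \<and> x \<in> Ms j}. g j * wt x) = (\<Sum>j<n. if x \<in> Ms j then g j * wt x else 0)"
      by (simp only: sum.inter_filter[OF finite_lessThan])
    have e2: "wt x * (\<Sum>j\<in>{j. j < n \<and> x \<in> Ms j}. g j) = (\<Sum>j\<in>{j. j < n \<and> x \<in> Ms j}. g j * wt x)"
      by (simp add: sum_distrib_left mult_ac)
    show "(\<Sum>j<n. if x \<in> Ms j then g j * wt x else 0) = wt x * (\<Sum>j\<in>{j. j < n \<and> x \<in> Ms j}. g j)"
      unfolding e2 e1 ..
  qed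
  finally have eq: "(\<Sum>j<n. g j * (\<Sum>x\<in>Ms j. wt x)) = (\<Sum>x\<in>M. wt x * (\<Sum>j\<in>{j. j < n \<and> x \<in> Ms j}. g j))" .
  have "(\<Sum>x\<in>M. wt x) \<le> (\<Sum>x\<in>M. wt x * (\<Sum>j\<in>{j. j < n \<and> x \<in> Ms j}. g j))"
  proof (rule sum_mono)
    fix x assume x: "x \<in> M"
    have "(\<Sum>j\<in>{j. j < n \<and> x \<in> Ms j}. g j) \<ge> 1" using assms(1) x unfolding valid_family_def by auto
    then show "wt x \<le> wt x * (\<Sum>j\<in>{j. j < n \<and> x \<in> Ms j}. g j)"
      using assms(3)[OF x] by (metis mult_left_mono mult.right_neutral)
  qed
  then show ?thesis using eq by simp
qed


definition acyc :: "(nat \<Rightarrow> nat set) \<Rightarrow> nat set \<Rightarrow> bool" where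
  "acyc A X \<longleftrightarrow> (\<forall>Y \<subseteq> X. Y \<noteq> {} \<longrightarrow> (\<exists>u\<in>Y. A u \<inter> Y = {}))"

lemma card_ge2: "finite S \<Longrightarrow> S \<noteq> {} \<Longrightarrow> card S \<noteq> 1 \<Longrightarrow> card S \<ge> 2"
proof -
  assume "finite S" "S \<noteq> {}" "card S \<noteq> 1"
  then have "card S > 0" by (simp add: card_gt_0_iff)
  with \<open>card S \<noteq> 1\<close> show "card S \<ge> 2" by linarith
qed

lemma card_as_sum: "finite S \<Longrightarrow> real (card (S \<inter> X)) = (\<Sum>x\<in>S. if x \<in> X then 1 else 0)"
  by (simp add: sum.If_cases Int_def)

lemma acyc_lower:
  assumes "finite S" "S \<noteq> {}" "acyc A X"
  shows "real (card (S \<inter> X)) \<le> betaR_set A S"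
  using assms(1,2)
proof (induction S rule: finite_psubset_induct)
  case (psubset S)
  show ?case
  proof (cases "card S = 1")
    case True
    then have "betaR_set A S = 1" using betaR_set_unfold[OF psubset.hyps(1)] by simp
    moreover have "card (S \<inter> X) \<le> card S" using psubset.hyps(1) by (simp add: card_mono)
    ultimately show ?thesis using True by simp
  next
    case False
    then have c2: "card S \<ge> 2" using card_ge2 psubset.hyps(1) psubset.prems by blast
    show ?thesis
    proof (rule lower_bound_intro[OF psubset.hyps(1) c2])
      fix n Ms g assume vf: "valid_family S n Ms g"
      have sub: "Ms j \<subset> S" "Ms j \<noteq> {}" "0 \<le> g j" if "j < n" for j
        using vf that unfolding valid_family_def by auto
      have IH: "real (card (Ms j \<inter> X)) \<le> betaR_set A (Ms j)" if "j < n" for j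
        using psubset.IH sub[OF that] by blast
      show "real (card (S \<inter> X)) \<le> family_cost A (betaR_set A) S n Ms g"
      proof (cases "S \<inter> X = {}")
        case True
        obtain i where i: "i \<in> S" using psubset.prems by blast
        have "0 \<le> (\<Sum>j\<in>{j. j < n \<and> \<not> Ms j \<subseteq> A i}. g j * betaR_set A (Ms j))"
        proof (rule sum_nonneg)
          fix j assume "j \<in> {j. j < n \<and> \<not> Ms j \<subseteq> A i}"
          then have j: "j < n" by simp
          have "0 \<le> betaR_set A (Ms j)" using IH[OF j] by (meson of_nat_0_le_iff order_trans)
          then show "0 \<le> g j * betaR_set A (Ms j)" using sub(3)[OF j] by simp
        qed
        also have "\<dots> \<le> family_cost A (betaR_set A) S n Ms g"
          by (rule cost_ge_user[OF psubset.hyps(1) i])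
        finally show ?thesis using True by simp
      next
        case False
        obtain u where u: "u \<in> S \<inter> X" "A u \<inter> (S \<inter> X) = {}"
          using assms(3) False unfolding acyc_def by (meson inf_le2)
        have "real (card (S \<inter> X)) = (\<Sum>x\<in>S. if x \<in> X then 1 else 0)"
          by (rule card_as_sum[OF psubset.hyps(1)])
        also have "\<dots> \<le> (\<Sum>j<n. g j * (\<Sum>x\<in>Ms j. if x \<in> X then 1 else 0))"
          by (rule double_counting[OF vf psubset.hyps(1)]) simp
        also have "\<dots> = (\<Sum>j<n. g j * real (card (Ms j \<inter> X)))"
        proof (rule sum.cong[OF refl])
          fix j assume "j \<in> {..<n}"
          then have "finite (Ms j)" using sub psubset.hyps(1) by (meson finite_subset lessThan_iff psubset_imp_subset)
          then show "g j * (\<Sum>x\<in>Ms j. if x \<in> X then 1 else 0) = g j * real (card (Ms j \<inter> X))"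
            using card_as_sum[of "Ms j" X] by simp
        qed
        also have "\<dots> = (\<Sum>j\<in>{j. j < n \<and> \<not> Ms j \<subseteq> A u}. g j * real (card (Ms j \<inter> X)))"
        proof (rule sum.mono_neutral_right)
          show "\<forall>j\<in>{..<n} - {j. j < n \<and> \<not> Ms j \<subseteq> A u}. g j * real (card (Ms j \<inter> X)) = 0"
          proof
            fix j assume j: "j \<in> {..<n} - {j. j < n \<and> \<not> Ms j \<subseteq> A u}"
            then have "Ms j \<subseteq> A u" "Ms j \<subseteq> S" using sub by auto
            then have "Ms j \<inter> X = {}" using u(2) by blast
            then show "g j * real (card (Ms j \<inter> X)) = 0" by simp
          qed
        qed auto
        also have "\<dots> \<le> (\<Sum>j\<in>{j. j < n \<and> \<not> Ms j \<subseteq> A u}. g j * betaR_set A (Ms j))"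
          by (rule sum_mono) (use IH sub in \<open>auto intro: mult_left_mono\<close>)
        also have "\<dots> \<le> family_cost A (betaR_set A) S n Ms g"
          using u by (intro cost_ge_user[OF psubset.hyps(1)]) auto
        finally show ?thesis .
      qed
    qed
  qed
qed

lemma betaR_nonneg: "finite S \<Longrightarrow> S \<noteq> {} \<Longrightarrow> 0 \<le> betaR_set A S"
  using acyc_lower[of S A "{}"] by (simp add: acyc_def)



lemma I6_even_mem: "even k \<Longrightarrow> x \<in> I6 l k \<longleftrightarrow> x = k - 1"
  unfolding I6_def by auto

lemma I6_c_mem: "x \<in> I6 l (4*l+1) \<longleftrightarrow> odd x \<and> 1 \<le> x \<and> x < 4*l"
proof -
  have "x \<in> I6 l (4*l+1) \<longleftrightarrow> (\<exists>i. x = 2*i - 1 \<and> i \<in> {1..2*l})" unfolding I6_def by auto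
  also have "\<dots> \<longleftrightarrow> odd x \<and> 1 \<le> x \<and> x < 4*l"
  proof
    assume "\<exists>i. x = 2*i - 1 \<and> i \<in> {1..2*l}"
    then show "odd x \<and> 1 \<le> x \<and> x < 4*l" by (auto; presburger)
  next
    assume h: "odd x \<and> 1 \<le> x \<and> x < 4*l"
    then have "x = 2*((x+1) div 2) - 1 \<and> (x+1) div 2 \<in> {1..2*l}" by (auto; presburger)
    then show "\<exists>i. x = 2*i - 1 \<and> i \<in> {1..2*l}" by blast
  qed
  finally show ?thesis .
qed

lemma I6_odd_mem:
  assumes "odd k" "k \<noteq> 4*l+1"
  shows "x \<in> I6 l k \<longleftrightarrow> x = 4*l+1 \<or> (even x \<and> 2 \<le> x \<and> x \<le> 4*l \<and> x \<noteq> k+1)"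
proof -
  have "x \<in> I6 l k \<longleftrightarrow> x = 4*l+1 \<or> (\<exists>j. x = 2*j \<and> j \<in> {1..2*l} - {(k+1) div 2})"
    using assms unfolding I6_def by auto
  also have "(\<exists>j. x = 2*j \<and> j \<in> {1..2*l} - {(k+1) div 2}) \<longleftrightarrow> (even x \<and> 2 \<le> x \<and> x \<le> 4*l \<and> x \<noteq> k+1)"
  proof
    assume "\<exists>j. x = 2*j \<and> j \<in> {1..2*l} - {(k+1) div 2}"
    then obtain j where "x = 2*j" "j \<in> {1..2*l}" "j \<noteq> (k+1) div 2" by auto
    then show "even x \<and> 2 \<le> x \<and> x \<le> 4*l \<and> x \<noteq> k+1" using assms(1) by auto
  next
    assume h: "even x \<and> 2 \<le> x \<and> x \<le> 4*l \<and> x \<noteq> k+1"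
    then have "x = 2*(x div 2) \<and> x div 2 \<in> {1..2*l} - {(k+1) div 2}" using assms(1) by (auto; presburger)
    then show "\<exists>j. x = 2*j \<and> j \<in> {1..2*l} - {(k+1) div 2}" by blast
  qed
  finally show ?thesis .
qed


lemma I6_c_mem2: "x \<in> I6 l (Suc (4*l)) \<longleftrightarrow> odd x \<and> 1 \<le> x \<and> x < 4*l"
  using I6_c_mem[of x l] by simp

definition Ev :: "nat \<Rightarrow> nat set" where "Ev l = {x. even x \<and> 2 \<le> x \<and> x \<le> 4*l}"
definition Od :: "nat \<Rightarrow> nat set" where "Od l = {x. odd x \<and> 1 \<le> x \<and> x < 4*l}"

lemma acyc_Ev: "acyc (I6 l) (Ev l \<union> {4*l+1})"
  unfolding acyc_def
proof (intro allI impI)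
  fix Y assume Y: "Y \<subseteq> Ev l \<union> {4*l+1}" "Y \<noteq> {}"
  then obtain u where u: "u \<in> Y" by blast
  have "I6 l u \<inter> Y = {}"
  proof (cases "even u")
    case True
    then have "u \<in> Ev l" using Y u by auto
    then have "2 \<le> u" "u \<le> 4*l" by (auto simp: Ev_def)
    then have "u - 1 \<notin> Ev l \<union> {4*l+1}" using True by (auto simp: Ev_def)
    then show ?thesis using True Y by (auto simp: I6_even_mem)
  next
    case False
    then have "u = 4*l+1" using Y u by (auto simp: Ev_def)
    then show ?thesis using Y by (auto simp: I6_c_mem I6_c_mem2 Ev_def)
  qed
  then show "\<exists>u\<in>Y. I6 l u \<inter> Y = {}" using u by blast
qed

lemma acyc_Od_e:
  assumes e: "e \<in> Ev l"
  shows "acyc (I6 l) (Od l \<union> {e})"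
  unfolding acyc_def
proof (intro allI impI)
  fix Y assume Y: "Y \<subseteq> Od l \<union> {e}" "Y \<noteq> {}"
  show "\<exists>u\<in>Y. I6 l u \<inter> Y = {}"
  proof (cases "e - 1 \<in> Y")
    case True
    have o: "odd (e - 1)" "e - 1 \<noteq> 4*l+1" using e by (auto simp: Ev_def)
    have "I6 l (e - 1) \<inter> Y = {}"
    proof (rule ccontr)
      assume "I6 l (e - 1) \<inter> Y \<noteq> {}"
      then obtain x where x: "x \<in> I6 l (e - 1)" "x \<in> Y" by blast
      then have "x = 4*l+1 \<or> (even x \<and> x \<noteq> e - 1 + 1)" using I6_odd_mem[OF o] by auto
      moreover have "e - 1 + 1 = e" using e by (auto simp: Ev_def)
      moreover have "e \<noteq> 4*l+1" using e by (auto simp: Ev_def)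
      ultimately show False using x(2) Y(1) by (auto simp: Od_def)
    qed
    then show ?thesis using True by blast
  next
    case False
    show ?thesis
    proof (cases "e \<in> Y")
      case True
      have "I6 l e \<inter> Y = {}" using False e by (auto simp: I6_even_mem Ev_def)
      then show ?thesis using True by blast
    next
      case False
      then obtain u where u: "u \<in> Y" "u \<in> Od l" using Y by blast
      then have o: "odd u" "u \<noteq> 4*l+1" by (auto simp: Od_def)
      have "I6 l u \<inter> Y = {}"
      proof (rule ccontr)
        assume "I6 l u \<inter> Y \<noteq> {}"
        then obtain x where x: "x \<in> I6 l u" "x \<in> Y" by blast
        then have "x = 4*l+1 \<or> even x" using I6_odd_mem[OF o] by auto
        then show False using x(2) Y(1) False by (auto simp: Od_def)
      qed
      then show ?thesis using u by blast
    qed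
  qed
qed

lemma acyc_Od: "acyc (I6 l) (Od l)"
  unfolding acyc_def
proof (intro allI impI)
  fix Y assume Y: "Y \<subseteq> Od l" "Y \<noteq> {}"
  then obtain u where u: "u \<in> Y" "u \<in> Od l" by blast
  then have o: "odd u" "u \<noteq> 4*l+1" by (auto simp: Od_def)
  have "I6 l u \<inter> Y = {}"
  proof (rule ccontr)
    assume "I6 l u \<inter> Y \<noteq> {}"
    then obtain x where x: "x \<in> I6 l u" "x \<in> Y" by blast
    then have "x = 4*l+1 \<or> even x" using I6_odd_mem[OF o] by auto
    then show False using x(2) Y(1) by (auto simp: Od_def)
  qed
  then show "\<exists>u\<in>Y. I6 l u \<inter> Y = {}" using u by blast
qed

lemma not_self: "x \<noteq> 0 \<Longrightarrow> x \<notin> I6 l x"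
proof (cases "even x")
  case True
  assume "x \<noteq> 0"
  then show ?thesis using True by (auto simp: I6_even_mem)
next
  case False
  show ?thesis
  proof (cases "x = 4*l+1")
    case True then show ?thesis using I6_c_mem[of x l] by simp
  next
    case F: False
    show ?thesis using I6_odd_mem[OF False F, of x] False F by auto
  qed
qed

lemma acyc_single: "x \<noteq> 0 \<Longrightarrow> acyc (I6 l) {x}"
proof -
  assume x: "x \<noteq> 0"
  show ?thesis unfolding acyc_def
  proof (intro allI impI)
    fix Y assume "Y \<subseteq> {x}" "Y \<noteq> {}"
    then have "Y = {x}" by blast
    then show "\<exists>u\<in>Y. I6 l u \<inter> Y = {}" using not_self[OF x, of l] by simp
  qed
qed


definition wt :: "nat \<Rightarrow> real" where "wt x = (if even x then 1 else 1/2)"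

lemma wt_nonneg: "0 \<le> wt x" by (simp add: wt_def)

lemma V_cases:
  assumes "x \<in> {1..4*l+1}"
  shows "x \<in> Ev l \<or> x \<in> Od l \<or> x = 4*l+1"
proof (cases "even x")
  case True
  then have "x \<noteq> 4*l+1" by auto
  then show ?thesis using assms True by (auto simp: Ev_def)
next
  case False
  then have "x \<noteq> 4*l" by auto
  then show ?thesis using assms False by (auto simp: Od_def)
qed

lemma Ev_Od_disj: "Ev l \<inter> Od l = {}" "4*l+1 \<notin> Ev l" "4*l+1 \<notin> Od l"
  by (auto simp: Ev_def Od_def)

lemma W_split:
  assumes "finite S" "S \<subseteq> {1..4*l+1}"
  shows "(\<Sum>x\<in>S. wt x) = real (card (S \<inter> Ev l)) + (real (card (S \<inter> Od l)) + real (card (S \<inter> {4*l+1}))) / 2"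
proof -
  have S: "S = (S \<inter> Ev l) \<union> ((S \<inter> Od l) \<union> (S \<inter> {4*l+1}))" using assms(2) V_cases by blast
  have d1: "(S \<inter> Ev l) \<inter> ((S \<inter> Od l) \<union> (S \<inter> {4*l+1})) = {}" using Ev_Od_disj by blast
  have d2: "(S \<inter> Od l) \<inter> (S \<inter> {4*l+1}) = {}" using Ev_Od_disj by blast
  have "(\<Sum>x\<in>S. wt x) = (\<Sum>x\<in>S \<inter> Ev l. wt x) + ((\<Sum>x\<in>S \<inter> Od l. wt x) + (\<Sum>x\<in>S \<inter> {4*l+1}. wt x))"
    using assms(1) d1 d2 by (subst S, subst sum.union_disjoint, auto intro: sum.union_disjoint)
  also have "(\<Sum>x\<in>S \<inter> Ev l. wt x) = (\<Sum>x\<in>S \<inter> Ev l. 1)" by (rule sum.cong) (auto simp: wt_def Ev_def)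
  also have "(\<Sum>x\<in>S \<inter> Od l. wt x) = (\<Sum>x\<in>S \<inter> Od l. 1/2)" by (rule sum.cong) (auto simp: wt_def Od_def)
  also have "(\<Sum>x\<in>S \<inter> {4*l+1}. wt x) = (\<Sum>x\<in>S \<inter> {4*l+1}. 1/2)" by (rule sum.cong) (auto simp: wt_def)
  finally show ?thesis by simp
qed



lemma small_case:
  assumes fin: "finite S" and ne: "S \<noteq> {}" and V: "S \<subseteq> {1..4*l+1}" and b1: "card (S \<inter> Ev l) \<le> 1"
  shows "(\<Sum>x\<in>S. wt x) \<le> betaR_set (I6 l) S"
proof -
  define a where "a = card (S \<inter> Od l)"
  define b where "b = card (S \<inter> Ev l)"
  define cc where "cc = card (S \<inter> {4*l+1})"
  have W: "(\<Sum>x\<in>S. wt x) = real b + (real a + real cc) / 2"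
    unfolding a_def b_def cc_def by (rule W_split[OF fin V])
  have h1: "real a \<le> betaR_set (I6 l) S"
    unfolding a_def by (rule acyc_lower[OF fin ne acyc_Od])
  have eqS: "S \<inter> (Ev l \<union> {4*l+1}) = (S \<inter> Ev l) \<union> (S \<inter> {4*l+1})" by blast
  have "card (S \<inter> (Ev l \<union> {4*l+1})) = b + cc" unfolding eqS b_def cc_def
    using fin Ev_Od_disj by (intro card_Un_disjoint) auto
  then have h2: "real (b + cc) \<le> betaR_set (I6 l) S"
    using acyc_lower[OF fin ne acyc_Ev, of l] by simp
  obtain x where x: "x \<in> S" using ne by blast
  then have "x \<noteq> 0" using V by auto
  then have "real (card (S \<inter> {x})) \<le> betaR_set (I6 l) S" by (rule acyc_lower[OF fin ne acyc_single])
  moreover have "S \<inter> {x} = {x}" using x by auto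
  ultimately have h3: "1 \<le> betaR_set (I6 l) S" by simp
  have "card (S \<inter> {4*l+1}) \<le> card {4*l+1}" by (rule card_mono) auto
  then have cc1: "cc \<le> 1" unfolding cc_def by simp
  have h4: "real (a + 1) \<le> betaR_set (I6 l) S" if "b = 1"
  proof -
    obtain e where e: "S \<inter> Ev l = {e}" using \<open>b = 1\<close> unfolding b_def by (meson card_1_singletonE)
    then have eE: "e \<in> Ev l" by blast
    have "S \<inter> (Od l \<union> {e}) = (S \<inter> Od l) \<union> {e}" using e by blast
    moreover have "e \<notin> S \<inter> Od l" using eE Ev_Od_disj by blast
    ultimately have "card (S \<inter> (Od l \<union> {e})) = a + 1" unfolding a_def using fin by simp
    then show ?thesis using acyc_lower[OF fin ne acyc_Od_e[OF eE]] by simp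
  qed
  have "b = 0 \<or> b = 1" using b1 unfolding b_def by linarith
  then show ?thesis
  proof
    assume "b = 0"
    then show ?thesis using W h1 h3 cc1 by (cases "a = 0") auto
  next
    assume b: "b = 1"
    have ccR: "real cc \<le> 1" using cc1 by simp
    show ?thesis
    proof (cases "a = 0")
      case True
      then show ?thesis using W h2 ccR b by simp
    next
      case False
      then have a1: "real a \<ge> 1" by simp
      have "real a + 1 \<le> betaR_set (I6 l) S" using h4[OF b] by simp
      moreover have "real b = 1" using b by simp
      ultimately show ?thesis using W a1 ccR by (simp add: field_simps)
    qed
  qed
qed



lemma formula_lower:
  assumes "finite S" "S \<noteq> {}" "S \<subseteq> {1..4*l+1}"
  shows "(\<Sum>x\<in>S. wt x) \<le> betaR_set (I6 l) S"
  using assms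
proof (induction S rule: finite_psubset_induct)
  case (psubset S)
  note fin = psubset.hyps(1)
  show ?case
  proof (cases "card (S \<inter> Ev l) \<le> 1")
    case True
    then show ?thesis using small_case[OF fin psubset.prems(1,2)] by blast
  next
    case False
    define K where "K = S \<inter> Ev l"
    define k where "k = card K"
    have k2: "k \<ge> 2" using False unfolding k_def K_def by simp
    have finK: "finite K" unfolding K_def using fin by simp
    have KS: "K \<subseteq> S" unfolding K_def by simp
    have "k \<le> card S" unfolding k_def using KS fin by (simp add: card_mono)
    then have c2: "card S \<ge> 2" using k2 by simp
    have Keven: "e \<in> K \<Longrightarrow> even e \<and> 2 \<le> e" for e unfolding K_def Ev_def by auto
    show ?thesis
    proof (rule lower_bound_intro[OF fin c2])
      fix n Ms g assume vf: "valid_family S n Ms g"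
      have sub: "Ms j \<subset> S" "Ms j \<noteq> {}" "0 \<le> g j" if "j < n" for j
        using vf that unfolding valid_family_def by auto
      have finM: "finite (Ms j)" if "j < n" for j
        using sub(1)[OF that] fin by (meson finite_subset psubset_imp_subset)
      have IH: "(\<Sum>x\<in>Ms j. wt x) \<le> betaR_set (I6 l) (Ms j)" if "j < n" for j
        using psubset.IH sub[OF that] psubset.prems(2) by (meson order_trans psubset_imp_subset)
      define cost where "cost = family_cost (I6 l) (betaR_set (I6 l)) S n Ms g"
      define U where "U e = (\<Sum>j\<in>{j. j < n \<and> \<not> Ms j \<subseteq> I6 l e}. g j * betaR_set (I6 l) (Ms j))" for e
      define cnt where "cnt j = (\<Sum>e\<in>K. if \<not> Ms j \<subseteq> I6 l e then 1 else (0::real))" for j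
      have s1: "(\<Sum>e\<in>K. U e) \<le> real k * cost"
        unfolding k_def
        by (rule sum_bounded_above) (use KS in \<open>auto simp: U_def cost_def intro: cost_ge_user[OF fin]\<close>)
      have s2: "(\<Sum>e\<in>K. U e) = (\<Sum>j<n. g j * betaR_set (I6 l) (Ms j) * cnt j)"
      proof -
        have "U e = (\<Sum>j<n. if \<not> Ms j \<subseteq> I6 l e then g j * betaR_set (I6 l) (Ms j) else 0)" for e
        proof -
          have "{j. j < n \<and> \<not> Ms j \<subseteq> I6 l e} = {j \<in> {..<n}. \<not> Ms j \<subseteq> I6 l e}" by auto
          then show ?thesis unfolding U_def by (simp only: sum.inter_filter[OF finite_lessThan])
        qed
        then have "(\<Sum>e\<in>K. U e) = (\<Sum>e\<in>K. \<Sum>j<n. if \<not> Ms j \<subseteq> I6 l e then g j * betaR_set (I6 l) (Ms j) else 0)"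
          by simp
        also have "\<dots> = (\<Sum>j<n. \<Sum>e\<in>K. if \<not> Ms j \<subseteq> I6 l e then g j * betaR_set (I6 l) (Ms j) else 0)"
          by (rule sum.swap)
        also have "\<dots> = (\<Sum>j<n. g j * betaR_set (I6 l) (Ms j) * cnt j)"
          unfolding cnt_def by (rule sum.cong[OF refl]) (subst sum_distrib_left, rule sum.cong, auto)
        finally show ?thesis .
      qed
      have s3: "real k * (\<Sum>x\<in>Ms j. wt x) \<le> betaR_set (I6 l) (Ms j) * cnt j" if j: "j < n" for j
      proof (cases "\<forall>e\<in>K. \<not> Ms j \<subseteq> I6 l e")
        case True
        then have "cnt j = real k" unfolding cnt_def k_def by simp
        then show ?thesis using IH[OF j] by (simp add: mult.commute mult_left_mono)
      next
        case False
        then obtain e0 where e0: "e0 \<in> K" "Ms j \<subseteq> I6 l e0" by blast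
        have "I6 l e0 = {e0 - 1}" using Keven[OF e0(1)] I6_even_mem by blast
        then have Msj: "Ms j = {e0 - 1}" using e0(2) sub(2)[OF j] subset_singletonD by metis
        have w: "(\<Sum>x\<in>Ms j. wt x) = 1/2" unfolding Msj using Keven[OF e0(1)] by (simp add: wt_def)
        have b1: "betaR_set (I6 l) (Ms j) = 1" unfolding Msj by (simp add: betaR_set_unfold)
        have "cnt j \<ge> (\<Sum>e\<in>K - {e0}. if \<not> Ms j \<subseteq> I6 l e then 1 else (0::real))"
          unfolding cnt_def by (rule sum_mono2) (use finK in auto)
        also have "(\<Sum>e\<in>K - {e0}. if \<not> Ms j \<subseteq> I6 l e then 1 else (0::real)) = (\<Sum>e\<in>K - {e0}. 1)"
        proof (rule sum.cong[OF refl])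
          fix e assume e: "e \<in> K - {e0}"
          have "I6 l e = {e - 1}" using Keven[of e] e I6_even_mem by blast
          moreover have "e0 - 1 \<noteq> e - 1" using Keven[of e] Keven[OF e0(1)] e by auto
          ultimately show "(if \<not> Ms j \<subseteq> I6 l e then 1 else (0::real)) = 1" unfolding Msj by auto
        qed
        also have "\<dots> = real k - 1"
        proof -
          have "card K \<ge> 1" using e0(1) finK by (metis One_nat_def Suc_leI card_gt_0_iff empty_iff)
          then show ?thesis using e0(1) finK unfolding k_def by (simp add: of_nat_diff)
        qed
        finally have "cnt j \<ge> real k - 1" .
        moreover have "real k \<ge> 2" using k2 by simp
        ultimately show ?thesis unfolding w b1 by linarith
      qed
      have "real k * (\<Sum>x\<in>S. wt x) \<le> real k * (\<Sum>j<n. g j * (\<Sum>x\<in>Ms j. wt x))"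
        using double_counting[OF vf fin wt_nonneg] k2 by simp
      also have "\<dots> = (\<Sum>j<n. g j * (real k * (\<Sum>x\<in>Ms j. wt x)))"
        by (simp add: sum_distrib_left mult_ac)
      also have "\<dots> \<le> (\<Sum>j<n. g j * (betaR_set (I6 l) (Ms j) * cnt j))"
        by (rule sum_mono) (use s3 sub in \<open>auto intro: mult_left_mono\<close>)
      also have "\<dots> = (\<Sum>e\<in>K. U e)" unfolding s2 by (simp add: mult_ac)
      also have "\<dots> \<le> real k * cost" by (rule s1)
      finally have "real k * (\<Sum>x\<in>S. wt x) \<le> real k * cost" .
      then show "(\<Sum>x\<in>S. wt x) \<le> family_cost (I6 l) (betaR_set (I6 l)) S n Ms g"
        using k2 unfolding cost_def by simp
    qed
  qed
qed



lemma sum_wt_odd: "(\<Sum>x\<in>{1..2*n+1}. wt x) = real n + (real n + 1) / 2"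
proof (induction n)
  case 0
  then show ?case by (simp add: wt_def)
next
  case (Suc n)
  define T where "T = {1..2*n+1}"
  have e: "{1..2*Suc n+1} = insert (2*n+3) (insert (2*n+2) T)" unfolding T_def by auto
  have fT: "finite T" "2*n+3 \<notin> insert (2*n+2) T" "2*n+2 \<notin> T" unfolding T_def by auto
  have "(\<Sum>x\<in>{1..2*Suc n+1}. wt x) = wt (2*n+3) + (wt (2*n+2) + (\<Sum>x\<in>T. wt x))"
    unfolding e using fT by (simp add: sum.insert)
  also have "wt (2*n+3) = 1/2" by (simp add: wt_def)
  also have "wt (2*n+2) = 1" by (simp add: wt_def)
  also have "(\<Sum>x\<in>T. wt x) = real n + (real n + 1) / 2" using Suc unfolding T_def .
  finally have X: "(\<Sum>x\<in>{1..2*Suc n+1}. wt x) = 1/2 + (1 + (real n + (real n + 1) / 2))" .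
  show ?case unfolding X by (simp add: field_simps)
qed

lemma sum_wt_V: "(\<Sum>x\<in>{1..4*l+1}. wt x) = 3 * real l + 1/2"
  using sum_wt_odd[of "2*l"] by (simp add: mult.assoc)

lemma lower_main: "3 * real l + 1/2 \<le> betaR (4*l+1) (I6 l)"
  unfolding betaR_def using formula_lower[of "{1..4*l+1}" l] sum_wt_V[of l] by simp

lemma upper_cost:
  assumes "finite M" "card M \<ge> 2" "valid_family M n Ms g"
  shows "betaR_set A M \<le> family_cost A (betaR_set A) M n Ms g"
proof -
  have "card M \<noteq> 1" using assms(2) by simp
  then have eq: "betaR_set A M = Inf {family_cost A (betaR_set A) M n Ms g | n Ms g. valid_family M n Ms g}"
    using betaR_set_unfold[OF assms(1)] by simp
  have M0: "M \<noteq> {}" using assms(2) by auto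
  have nn: "0 \<le> family_cost A (betaR_set A) M n' Ms' g'" if vf: "valid_family M n' Ms' g'" for n' Ms' g'
  proof -
    obtain i where i: "i \<in> M" using M0 by blast
    have "0 \<le> (\<Sum>j\<in>{j. j < n' \<and> \<not> Ms' j \<subseteq> A i}. g' j * betaR_set A (Ms' j))"
    proof (rule sum_nonneg)
      fix j assume "j \<in> {j. j < n' \<and> \<not> Ms' j \<subseteq> A i}"
      then have j: "j < n'" by simp
      have "Ms' j \<subset> M" "Ms' j \<noteq> {}" "0 \<le> g' j" using vf j unfolding valid_family_def by auto
      moreover then have "finite (Ms' j)" using assms(1) by (meson finite_subset psubset_imp_subset)
      ultimately show "0 \<le> g' j * betaR_set A (Ms' j)" using betaR_nonneg by simp
    qed
    also have "\<dots> \<le> family_cost A (betaR_set A) M n' Ms' g'" by (rule cost_ge_user[OF assms(1) i])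
    finally show ?thesis .
  qed
  show ?thesis unfolding eq
    by (rule cInf_lower) (use assms(3) nn in \<open>auto simp: bdd_below_def\<close>)
qed

lemma cost_le_total:
  assumes "finite M" "M \<noteq> {}" "valid_family M n Ms g"
  shows "family_cost A (betaR_set A) M n Ms g \<le> (\<Sum>j<n. g j * betaR_set A (Ms j))"
proof -
  have nn: "0 \<le> g j * betaR_set A (Ms j)" if j: "j < n" for j
  proof -
    have "Ms j \<subset> M" "Ms j \<noteq> {}" "0 \<le> g j" using assms(3) j unfolding valid_family_def by auto
    moreover then have "finite (Ms j)" using assms(1) by (meson finite_subset psubset_imp_subset)
    ultimately show ?thesis using betaR_nonneg by simp
  qed
  show ?thesis unfolding family_cost_def
  proof (rule Max.boundedI)
    show "finite ((\<lambda>i. \<Sum>j | j < n \<and> \<not> Ms j \<subseteq> A i. g j * betaR_set A (Ms j)) ` M)" using assms(1) by simp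
    show "(\<lambda>i. \<Sum>j | j < n \<and> \<not> Ms j \<subseteq> A i. g j * betaR_set A (Ms j)) ` M \<noteq> {}" using assms(2) by simp
    fix a assume "a \<in> (\<lambda>i. \<Sum>j | j < n \<and> \<not> Ms j \<subseteq> A i. g j * betaR_set A (Ms j)) ` M"
    then obtain i where a: "a = (\<Sum>j | j < n \<and> \<not> Ms j \<subseteq> A i. g j * betaR_set A (Ms j))" by blast
    show "a \<le> (\<Sum>j<n. g j * betaR_set A (Ms j))" unfolding a
      by (rule sum_mono2) (use nn in auto)
  qed
qed

lemma singleton_bound:
  assumes "finite M" "card M \<ge> 2" "\<And>i. i \<in> M \<Longrightarrow> card (M - A i) \<le> K"
  shows "betaR_set A M \<le> real K"
proof -
  let ?xs = "sorted_list_of_set M"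
  let ?Ms = "\<lambda>j. {?xs ! j}"
  have M0: "M \<noteq> {}" using assms(2) by auto
  have "betaR_set A M \<le> family_cost A (betaR_set A) M (card M) ?Ms (\<lambda>_. 1)"
    by (rule upper_cost[OF assms(1,2) singleton_valid[OF assms(1,2)]])
  also have "\<dots> \<le> real K" unfolding family_cost_def
  proof (rule Max.boundedI)
    show "finite ((\<lambda>i. \<Sum>j | j < card M \<and> \<not> ?Ms j \<subseteq> A i. 1 * betaR_set A (?Ms j)) ` M)" using assms(1) by simp
    show "(\<lambda>i. \<Sum>j | j < card M \<and> \<not> ?Ms j \<subseteq> A i. 1 * betaR_set A (?Ms j)) ` M \<noteq> {}" using M0 by simp
    fix a assume "a \<in> (\<lambda>i. \<Sum>j | j < card M \<and> \<not> ?Ms j \<subseteq> A i. 1 * betaR_set A (?Ms j)) ` M"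
    then obtain i where i: "i \<in> M" and a: "a = (\<Sum>j | j < card M \<and> \<not> ?Ms j \<subseteq> A i. 1 * betaR_set A (?Ms j))" by blast
    let ?J = "{j. j < card M \<and> \<not> ?Ms j \<subseteq> A i}"
    have "a = (\<Sum>j\<in>?J. 1)" unfolding a by (rule sum.cong) (auto simp: betaR_set_unfold)
    also have "\<dots> = real (card ?J)" by simp
    also have "card ?J \<le> card (M - A i)"
    proof -
      have inj: "inj_on (nth ?xs) ?J"
        by (rule inj_on_nth) (use assms(1) in auto)
      have mem: "?xs ! j \<in> M" if "j < card M" for j
        using that assms(1) nth_mem[of j ?xs] by simp
      have "(nth ?xs) ` ?J \<subseteq> M - A i"
        using mem by auto
      then have "card ((nth ?xs) ` ?J) \<le> card (M - A i)" using assms(1) by (intro card_mono) auto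
      then show ?thesis using card_image[OF inj] by simp
    qed
    then have "real (card ?J) \<le> real K" using assms(3)[OF i] by simp
    finally show "a \<le> real K" .
  qed
  finally show ?thesis .
qed



lemma card_minus_known:
  assumes "finite M" "x \<in> M" "x \<in> A"
  shows "card (M - A) \<le> card M - 1"
proof -
  have "M - A \<subseteq> M - {x}" using assms by auto
  then have "card (M - A) \<le> card (M - {x})" using assms(1) by (intro card_mono) auto
  then show ?thesis using assms(1,2) by simp
qed

lemma user_le_total_minus:
  assumes "finite M" "M \<noteq> {}" "valid_family M n Ms g" "i \<in> M" "j0 < n" "Ms j0 \<subseteq> A i"
  shows "(\<Sum>j\<in>{j. j < n \<and> \<not> Ms j \<subseteq> A i}. g j * betaR_set A (Ms j))
          \<le> (\<Sum>j<n. g j * betaR_set A (Ms j)) - g j0 * betaR_set A (Ms j0)"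
proof -
  have nn: "0 \<le> g j * betaR_set A (Ms j)" if j: "j < n" for j
  proof -
    have "Ms j \<subset> M" "Ms j \<noteq> {}" "0 \<le> g j" using assms(3) j unfolding valid_family_def by auto
    moreover then have "finite (Ms j)" using assms(1) by (meson finite_subset psubset_imp_subset)
    ultimately show ?thesis using betaR_nonneg by simp
  qed
  have "(\<Sum>j\<in>{j. j < n \<and> \<not> Ms j \<subseteq> A i}. g j * betaR_set A (Ms j)) \<le> (\<Sum>j\<in>{..<n} - {j0}. g j * betaR_set A (Ms j))"
    by (rule sum_mono2) (use assms(6) nn in auto)
  also have "\<dots> = (\<Sum>j<n. g j * betaR_set A (Ms j)) - g j0 * betaR_set A (Ms j0)"
    using assms(5) by (simp add: sum_diff1)
  finally show ?thesis .
qed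

lemma cover_two:
  fixes n :: nat
  assumes "j1 \<noteq> j2" "j1 < n" "j2 < n" "x \<in> Ms j1" "x \<in> Ms j2" "\<And>j. j < n \<Longrightarrow> 0 \<le> g j"
    "g j1 + g j2 \<ge> (1::real)"
  shows "(\<Sum>j\<in>{j. j < n \<and> x \<in> Ms j}. g j) \<ge> 1"
proof -
  have "g j1 + g j2 = (\<Sum>j\<in>{j1, j2}. g j)" using assms(1) by simp
  also have "\<dots> \<le> (\<Sum>j\<in>{j. j < n \<and> x \<in> Ms j}. g j)"
    by (rule sum_mono2) (use assms finite_subset[of "{j. j < n \<and> x \<in> Ms j}" "{..<n}"] in auto)
  finally show ?thesis using assms(7) by simp
qed

lemma cover_one:
  fixes n :: nat
  assumes "j1 < n" "x \<in> Ms j1" "\<And>j. j < n \<Longrightarrow> 0 \<le> g j" "g j1 \<ge> (1::real)"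
  shows "(\<Sum>j\<in>{j. j < n \<and> x \<in> Ms j}. g j) \<ge> 1"
proof -
  have "g j1 = (\<Sum>j\<in>{j1}. g j)" by simp
  also have "\<dots> \<le> (\<Sum>j\<in>{j. j < n \<and> x \<in> Ms j}. g j)"
    by (rule sum_mono2) (use assms finite_subset[of "{j. j < n \<and> x \<in> Ms j}" "{..<n}"] in auto)
  finally show ?thesis using assms(4) by simp
qed

definition PP :: "nat \<Rightarrow> nat set" where "PP a = {2*a-1, 2*a}"

lemma pair2:
  assumes "a \<noteq> b" "1 \<le> a" "a \<le> 2*l" "1 \<le> b" "b \<le> 2*l"
  shows "betaR_set (I6 l) (PP a \<union> PP b) \<le> 3"
proof -
  let ?M = "PP a \<union> PP b"
  have eqM: "?M = insert (2*a-1) (insert (2*a) (insert (2*b-1) {2*b}))" unfolding PP_def by auto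
  have d: "2*a-1 \<notin> insert (2*a) (insert (2*b-1) {2*b})" "2*a \<notin> insert (2*b-1) {2*b}" "2*b-1 \<notin> {2*b}"
    using assms by auto
  have cM: "card ?M = 4" unfolding eqM using d by simp
  have "betaR_set (I6 l) ?M \<le> real 3"
  proof (rule singleton_bound)
    show "finite ?M" unfolding PP_def by simp
    show "card ?M \<ge> 2" using cM by simp
    fix i assume i: "i \<in> ?M"
    have "\<exists>x\<in>?M. x \<in> I6 l i"
    proof -
      consider "i = 2*a-1" | "i = 2*a" | "i = 2*b-1" | "i = 2*b" using i unfolding PP_def by auto
      then show ?thesis
      proof cases
        case 1
        have o: "odd i" "i \<noteq> 4*l+1" using 1 assms by auto
        have "2*b \<in> I6 l i" using I6_odd_mem[OF o, of "2*b"] 1 assms by auto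
        then show ?thesis unfolding PP_def by auto
      next
        case 2
        have "2*a-1 \<in> I6 l i" using 2 by (simp add: I6_even_mem)
        then show ?thesis unfolding PP_def by auto
      next
        case 3
        have o: "odd i" "i \<noteq> 4*l+1" using 3 assms by auto
        have "2*a \<in> I6 l i" using I6_odd_mem[OF o, of "2*a"] 3 assms by auto
        then show ?thesis unfolding PP_def by auto
      next
        case 4
        have "2*b-1 \<in> I6 l i" using 4 by (simp add: I6_even_mem)
        then show ?thesis unfolding PP_def by auto
      qed
    qed
    then obtain x where "x \<in> ?M" "x \<in> I6 l i" by blast
    then have "card (?M - I6 l i) \<le> card ?M - 1" by (intro card_minus_known) (auto simp: PP_def)
    then show "card (?M - I6 l i) \<le> 3" using cM by simp
  qed
  then show ?thesis by simp
qed

lemma pairc: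
  assumes "1 \<le> a" "a \<le> 2*l"
  shows "betaR_set (I6 l) (PP a \<union> {4*l+1}) \<le> 2"
proof -
  let ?M = "PP a \<union> {4*l+1}"
  have eqM: "?M = insert (2*a-1) (insert (2*a) {4*l+1})" unfolding PP_def by auto
  have d: "2*a-1 \<notin> insert (2*a) {4*l+1}" "2*a \<notin> {4*l+1}"
    using assms by auto
  have cM: "card ?M = 3" unfolding eqM using d by simp
  have "betaR_set (I6 l) ?M \<le> real 2"
  proof (rule singleton_bound)
    show "finite ?M" unfolding PP_def by simp
    show "card ?M \<ge> 2" using cM by simp
    fix i assume i: "i \<in> ?M"
    have "\<exists>x\<in>?M. x \<in> I6 l i"
    proof -
      consider "i = 2*a-1" | "i = 2*a" | "i = 4*l+1" using i unfolding PP_def by auto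
      then show ?thesis
      proof cases
        case 1
        have o: "odd i" "i \<noteq> 4*l+1" using 1 assms by auto
        have "4*l+1 \<in> I6 l i" using I6_odd_mem[OF o, of "4*l+1"] by auto
        then show ?thesis by auto
      next
        case 2
        have "2*a-1 \<in> I6 l i" using 2 by (simp add: I6_even_mem)
        then show ?thesis unfolding PP_def by auto
      next
        case 3
        have "2*a-1 \<in> I6 l i" unfolding 3 I6_c_mem using assms by auto
        then show ?thesis unfolding PP_def by auto
      qed
    qed
    then obtain x where "x \<in> ?M" "x \<in> I6 l i" by blast
    then have "card (?M - I6 l i) \<le> card ?M - 1" by (intro card_minus_known) (auto simp: PP_def)
    then show "card (?M - I6 l i) \<le> 2" using cM by simp
  qed
  then show ?thesis by simp
qed



lemma upper_ge2:
  assumes l2: "l \<ge> 2"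
  shows "betaR (4*l+1) (I6 l) \<le> 3 * real l + 1/2"
proof -
  define q where "q = 2*l - 1"
  define nxt where "nxt a = (if a = q then 1 else a + 1)" for a
  define Ms where "Ms j = (if j < q then PP (j+1) \<union> PP (nxt (j+1)) else PP (2*l) \<union> {4*l+1})" for j
  define g :: "nat \<Rightarrow> real" where "g j = (if j < q then 1/2 else 1)" for j
  define V where "V = {1..4*l+1}"
  have q3: "q \<ge> 3" and nq: "2*l = Suc q" using l2 unfolding q_def by auto
  have PPV: "PP a \<subseteq> V" if "1 \<le> a" "a \<le> 2*l" for a using that unfolding PP_def V_def by auto
  have nxt_rng: "1 \<le> nxt a \<and> nxt a \<le> q" if "1 \<le> a" "a \<le> q" for a using that unfolding nxt_def by auto
  have nxt_ne: "nxt a \<noteq> a" if "1 \<le> a" "a \<le> q" for a using that q3 unfolding nxt_def by auto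
  have vf: "valid_family V (2*l) Ms g"
    unfolding valid_family_def
  proof (intro conjI allI impI ballI)
    fix j assume j: "j < 2*l"
    show "Ms j \<noteq> {}" unfolding Ms_def PP_def by auto
    show "0 \<le> g j" "g j \<le> 1" unfolding g_def by auto
    show "Ms j \<subset> V"
    proof (cases "j < q")
      case True
      have "Ms j = PP (j+1) \<union> PP (nxt (j+1))" using True unfolding Ms_def by simp
      moreover have "PP (j+1) \<subseteq> V" by (rule PPV) (use True q_def in auto)
      moreover have "PP (nxt (j+1)) \<subseteq> V" by (rule PPV) (use True nxt_rng[of "j+1"] q_def in auto)
      moreover have "4*l+1 \<in> V" "4*l+1 \<notin> PP (j+1)" "4*l+1 \<notin> PP (nxt (j+1))"
        using True nxt_rng[of "j+1"] q_def unfolding V_def PP_def by auto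
      ultimately show ?thesis by blast
    next
      case False
      have "Ms j = PP (2*l) \<union> {4*l+1}" using False unfolding Ms_def by simp
      moreover have "PP (2*l) \<subseteq> V" by (rule PPV) (use l2 in auto)
      moreover have "4*l+1 \<in> V" "1 \<in> V" "1 \<notin> PP (2*l) \<union> {4*l+1}" using l2 unfolding V_def PP_def by auto
      ultimately show ?thesis by blast
    qed
  next
    fix x assume x: "x \<in> V"
    have gnn: "\<And>j. j < 2*l \<Longrightarrow> 0 \<le> g j" unfolding g_def by auto
    define a where "a = (x+1) div 2"
    have xa: "x = 2*a - 1 \<or> x = 2*a" using x unfolding a_def V_def by (auto; presburger)
    have a1: "1 \<le> a" using x unfolding a_def V_def by auto
    show "1 \<le> (\<Sum>j\<in>{j. j < 2*l \<and> x \<in> Ms j}. g j)"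
    proof (cases "x = 4*l+1 \<or> a = 2*l")
      case True
      have "x \<in> Ms q" unfolding Ms_def using True xa unfolding PP_def by auto
      then show ?thesis by (intro cover_one[of q]) (use nq gnn in \<open>auto simp: g_def\<close>)
    next
      case False
      then have aq: "a \<le> q" using x xa unfolding V_def q_def by auto
      have xP: "x \<in> PP a" using xa unfolding PP_def by auto
      define j2 where "j2 = (if a = 1 then q - 1 else a - 2)"
      have j2q: "j2 < q" "nxt (j2+1) = a" using a1 aq q3 unfolding j2_def nxt_def by auto
      have in1: "x \<in> Ms (a-1)" unfolding Ms_def using a1 aq xP by auto
      have in2: "x \<in> Ms j2" unfolding Ms_def using j2q xP by auto
      have ne: "a - 1 \<noteq> j2" using a1 aq q3 unfolding j2_def by auto
      show ?thesis
        by (rule cover_two[OF ne _ _ in1 in2 gnn]) (use a1 aq j2q nq in \<open>auto simp: g_def\<close>)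
    qed
  qed
  have Vfin: "finite V" and V2: "card V \<ge> 2" unfolding V_def using l2 by auto
  have "betaR (4*l+1) (I6 l) = betaR_set (I6 l) V" unfolding betaR_def V_def ..
  also have "\<dots> \<le> family_cost (I6 l) (betaR_set (I6 l)) V (2*l) Ms g"
    by (rule upper_cost[OF Vfin V2 vf])
  also have "\<dots> \<le> (\<Sum>j<2*l. g j * betaR_set (I6 l) (Ms j))"
    by (rule cost_le_total[OF Vfin _ vf]) (use V2 in auto)
  also have "\<dots> = (\<Sum>j<q. g j * betaR_set (I6 l) (Ms j)) + g q * betaR_set (I6 l) (Ms q)"
    unfolding nq by simp
  also have "\<dots> \<le> (\<Sum>j<q. 1/2 * 3) + 1 * 2"
  proof (rule add_mono)
    show "(\<Sum>j<q. g j * betaR_set (I6 l) (Ms j)) \<le> (\<Sum>j<q. 1/2 * 3)"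
    proof (rule sum_mono)
      fix j assume "j \<in> {..<q}"
      then have j: "j < q" by simp
      have "betaR_set (I6 l) (Ms j) \<le> 3" unfolding Ms_def using j
        by (simp, intro pair2) (use nxt_ne[of "j+1"] nxt_rng[of "j+1"] q_def in auto)
      then show "g j * betaR_set (I6 l) (Ms j) \<le> 1/2 * 3" using j unfolding g_def by simp
    qed
    show "g q * betaR_set (I6 l) (Ms q) \<le> 1 * 2"
      unfolding g_def Ms_def using pairc[of "2*l" l] l2 by simp
  qed
  also have "\<dots> = 3 * real l + 1/2" using l2 unfolding q_def by (simp add: of_nat_diff field_simps)
  finally show ?thesis .
qed



lemma A1: "4 \<in> I6 1 1" "5 \<in> I6 1 1" "1 \<in> I6 1 2" "2 \<in> I6 1 3" "5 \<in> I6 1 3"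
  "3 \<in> I6 1 4" "1 \<in> I6 1 5" "3 \<in> I6 1 5"
  by (simp_all add: I6_odd_mem I6_even_mem I6_c_mem[of _ 1, simplified])

lemma two_bound:
  assumes "a \<noteq> b" "a \<in> I6 l b" "b \<in> I6 l a"
  shows "betaR_set (I6 l) {a, b} \<le> 1"
proof -
  have c: "card {a, b} = 2" using assms(1) by simp
  have "betaR_set (I6 l) {a, b} \<le> real 1"
  proof (rule singleton_bound)
    show "finite {a, b}" by simp
    show "card {a, b} \<ge> 2" using c by simp
    fix i assume i: "i \<in> {a, b}"
    have "card ({a, b} - I6 l i) \<le> card {a, b} - 1"
    proof (cases "i = a")
      case True
      then show ?thesis using assms(3) by (intro card_minus_known[of _ b]) auto
    next
      case False
      then have "i = b" using i by simp
      then show ?thesis using assms(2) by (intro card_minus_known[of _ a]) auto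
    qed
    then show "card ({a, b} - I6 l i) \<le> 1" using c by simp
  qed
  then show ?thesis by simp
qed

lemma two_bound2:
  assumes "a \<noteq> b"
  shows "betaR_set (I6 l) {a, b} \<le> 2"
proof -
  have c: "card {a, b} = 2" using assms(1) by simp
  have "betaR_set (I6 l) {a, b} \<le> real 2"
  proof (rule singleton_bound)
    show "finite {a, b}" by simp
    show "card {a, b} \<ge> 2" using c by simp
    fix i assume i: "i \<in> {a, b}"
    have "card ({a, b} - I6 l i) \<le> card {a, b}" by (rule card_mono) auto
    then show "card ({a, b} - I6 l i) \<le> 2" using c by simp
  qed
  then show ?thesis by simp
qed

lemma lt7: "j < (7::nat) \<Longrightarrow> j = 0 \<or> j = 1 \<or> j = 2 \<or> j = 3 \<or> j = 4 \<or> j = 5 \<or> j = 6" by auto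

lemma upper_l1: "betaR (4*1+1) (I6 1) \<le> 3 * real 1 + 1/2"
proof -
  define L where "L = [{1},{2},{3},{4},{1,5},{3,5},{2,4::nat}]"
  define Ms where "Ms j = L ! j" for j
  define g :: "nat \<Rightarrow> real" where "g j = 1/2" for j
  define V :: "nat set" where "V = {1..5}"
  have V5: "V = {1,2,3,4,5}" unfolding V_def by auto
  have vf: "valid_family V 7 Ms g"
    unfolding valid_family_def
  proof (intro conjI allI impI ballI)
    fix j :: nat assume j: "j < 7"
    show "Ms j \<noteq> {}" using lt7[OF j] unfolding Ms_def L_def by auto
    have h: "Ms j \<subseteq> V \<and> card (Ms j) \<le> 2" using lt7[OF j] unfolding Ms_def L_def V5 by auto
    have "card V = 5" unfolding V5 by simp
    then have "Ms j \<noteq> V" using h by auto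
    then show "Ms j \<subset> V" using h by auto
    show "0 \<le> g j" "g j \<le> 1" unfolding g_def by auto
  next
    fix x assume x: "x \<in> V"
    have gnn: "\<And>j. j < 7 \<Longrightarrow> 0 \<le> g j" unfolding g_def by auto
    have gg: "g j1 + g j2 = 1" for j1 j2 unfolding g_def by simp
    have "x = 1 \<or> x = 2 \<or> x = 3 \<or> x = 4 \<or> x = 5" using x unfolding V5 by auto
    then show "1 \<le> (\<Sum>j\<in>{j. j < 7 \<and> x \<in> Ms j}. g j)"
    proof (elim disjE)
      assume "x = 1" then show ?thesis
        by (intro cover_two[of 0 4]) (auto simp: Ms_def L_def g_def)
    next
      assume "x = 2" then show ?thesis
        by (intro cover_two[of 1 6]) (auto simp: Ms_def L_def g_def)
    next
      assume "x = 3" then show ?thesis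
        by (intro cover_two[of 2 5]) (auto simp: Ms_def L_def g_def)
    next
      assume "x = 4" then show ?thesis
        by (intro cover_two[of 3 6]) (auto simp: Ms_def L_def g_def)
    next
      assume "x = 5" then show ?thesis
        by (intro cover_two[of 4 5]) (auto simp: Ms_def L_def g_def)
    qed
  qed
  have Vfin: "finite V" and V2: "card V \<ge> 2" and Vne: "V \<noteq> {}" unfolding V5 by auto
  have b1: "betaR_set (I6 1) {x} = 1" for x by (simp add: betaR_set_unfold)
  have b15: "betaR_set (I6 1) {1,5} \<le> 1" using A1 by (intro two_bound) auto
  have b35: "betaR_set (I6 1) {3,5} \<le> 1" using A1 by (intro two_bound) auto
  have b24: "betaR_set (I6 1) {2,4} \<le> 2" by (intro two_bound2) auto
  have total: "(\<Sum>j<7. g j * betaR_set (I6 1) (Ms j)) \<le> 4"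
  proof -
    have "(\<Sum>j<7. g j * betaR_set (I6 1) (Ms j)) =
      1/2 * (betaR_set (I6 1) {1} + betaR_set (I6 1) {2} + betaR_set (I6 1) {3} + betaR_set (I6 1) {4}
        + betaR_set (I6 1) {1,5} + betaR_set (I6 1) {3,5} + betaR_set (I6 1) {2,4})"
      by (simp add: numeral_eq_Suc Ms_def L_def g_def field_simps)
    then show ?thesis using b1 b15 b35 b24 by simp
  qed
  have "family_cost (I6 1) (betaR_set (I6 1)) V 7 Ms g \<le> 7/2"
    unfolding family_cost_def
  proof (rule Max.boundedI)
    show "finite ((\<lambda>i. \<Sum>j | j < 7 \<and> \<not> Ms j \<subseteq> I6 1 i. g j * betaR_set (I6 1) (Ms j)) ` V)" using Vfin by simp
    show "(\<lambda>i. \<Sum>j | j < 7 \<and> \<not> Ms j \<subseteq> I6 1 i. g j * betaR_set (I6 1) (Ms j)) ` V \<noteq> {}" using Vne by simp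
    fix a assume "a \<in> (\<lambda>i. \<Sum>j | j < 7 \<and> \<not> Ms j \<subseteq> I6 1 i. g j * betaR_set (I6 1) (Ms j)) ` V"
    then obtain i where i: "i \<in> V" and a: "a = (\<Sum>j | j < 7 \<and> \<not> Ms j \<subseteq> I6 1 i. g j * betaR_set (I6 1) (Ms j))" by blast
    have "\<exists>j0<7. Ms j0 \<subseteq> I6 1 i \<and> card (Ms j0) = 1"
    proof -
      have "i = 1 \<or> i = 2 \<or> i = 3 \<or> i = 4 \<or> i = 5" using i unfolding V5 by auto
      then show ?thesis
      proof (elim disjE)
        assume "i = 1" then show ?thesis using A1 by (intro exI[of _ 3]) (simp add: Ms_def L_def)
      next
        assume "i = 2" then show ?thesis using A1 by (intro exI[of _ 0]) (simp add: Ms_def L_def)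
      next
        assume "i = 3" then show ?thesis using A1 by (intro exI[of _ 1]) (simp add: Ms_def L_def)
      next
        assume "i = 4" then show ?thesis using A1 by (intro exI[of _ 2]) (simp add: Ms_def L_def)
      next
        assume "i = 5" then show ?thesis using A1 by (intro exI[of _ 0]) (simp add: Ms_def L_def)
      qed
    qed
    then obtain j0 where j0: "j0 < 7" "Ms j0 \<subseteq> I6 1 i" "card (Ms j0) = 1" by blast
    have "betaR_set (I6 1) (Ms j0) = 1" using j0(3) by (metis card_1_singletonE b1)
    then have "a \<le> (\<Sum>j<7. g j * betaR_set (I6 1) (Ms j)) - 1/2"
      using user_le_total_minus[where A="I6 1", OF Vfin Vne vf i j0(1,2)] unfolding a g_def by simp
    then show "a \<le> 7/2" using total by simp
  qed
  moreover have "betaR_set (I6 1) V \<le> family_cost (I6 1) (betaR_set (I6 1)) V 7 Ms g"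
    by (rule upper_cost[OF Vfin V2 vf])
  ultimately show ?thesis unfolding betaR_def V_def by simp
qed


theorem proposition9:
  fixes l :: nat
  assumes "l \<ge> 1"
  shows "betaR (4*l+1) (I6 l) = 3 * real l + 1/2"
proof -
  have up: "betaR (4*l+1) (I6 l) \<le> 3 * real l + 1/2"
  proof (cases "l = 1")
    case True
    then show ?thesis using upper_l1 by simp
  next
    case False
    then have "l \<ge> 2" using assms by simp
    then show ?thesis by (rule upper_ge2)
  qed
  show ?thesis using lower_main[of l] up by linarith
qed

end
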